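(* Let $F$ be a Banach lattice, $H\subset F$ a subspace and $0<r\le1$. Then $H$ contains no pair $e,f$ of unit vectors with $\||e|\wedge|f|\|<r$ if and only if $H$ has the $\frac1r$-SPR property, i.e. $\min(\|g+h\|,\|g-h\|)\le\frac1r\,\||g|-|h|\|$ for all $g,h\in H$.
   Context: For $s\ge1$, a subspace $H$ of a Banach lattice has the $s$-stable phase retrieval ($s$-SPR) property if $\|g+h\|\wedge\|g-h\|\le s\,\||g|-|h|\|$ for all $g,h\in H$. *)

theory Defs
  imports "HOL-Analysis.Analysis"
begin

definition labs :: "'a::{lattice, uminus} \<Rightarrow> 'a" where
  "labs x = sup x (- x)"

class banach_lattice = banach + ordered_real_vector + lattice +
  assumes norm_lattice_mono: "sup x (- x) \<le> sup y (- y) \<Longrightarrow> norm x \<le> norm y"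

definition SPR :: "real \<Rightarrow> 'a::banach_lattice set \<Rightarrow> bool" where
  "SPR s H \<longleftrightarrow> (\<forall>g\<in>H. \<forall>h\<in>H.
      min (norm (g + h)) (norm (g - h)) \<le> s * norm (labs g - labs h))"

end

theory Submission
  imports Defs "HOL-Library.Lattice_Algebras"
begin

subclass (in banach_lattice) lattice_ab_group_add ..

lemma labs_nonneg: "0 \<le> labs (x::'a::lattice_ab_group_add)"
proof -
  have "x + - x \<le> labs x + labs x" unfolding labs_def by (intro add_mono) auto
  thus ?thesis by simp
qed

lemma labs_of_nonneg: "0 \<le> (x::'a::lattice_ab_group_add) \<Longrightarrow> labs x = x"
  unfolding labs_def by (metis minus_le_self_iff sup.absorb1)

lemma labs_labs: "labs (labs (x::'a::lattice_ab_group_add)) = labs x"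
  using labs_nonneg labs_of_nonneg by blast

lemma sup4_swap: "sup (sup (a::'a::lattice) c) (sup b d) = sup (sup a b) (sup c d)"
  by (intro order.antisym) (simp_all add: le_supI1 le_supI2)

lemma labs_A: fixes x y :: "'a::lattice_ab_group_add"
  shows "sup (labs (x+y)) (labs (x-y)) = labs x + labs y"
proof -
  have "labs x + labs y = sup (sup (x+y) (-x+y)) (sup (x + -y) (-x + -y))"
    unfolding labs_def by (simp only: add_sup_distrib_left add_sup_distrib_right)
  moreover have "sup (labs (x+y)) (labs (x-y)) = sup (sup (x+y) (-x + -y)) (sup (x + -y) (-x + - (-y)))"
    by (simp only: labs_def minus_add_distrib diff_conv_add_uminus)
  moreover have "sup (sup (x+y) (-x + -y)) (sup (x + -y) (-x + - (-y))) = sup (sup (x+y) (-x+y)) (sup (x + -y) (-x + -y))"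
    by (intro order.antisym) (simp_all add: le_supI1 le_supI2)
  ultimately show ?thesis by (simp only:)
qed

lemma labs_C: fixes p q :: "'a::lattice_ab_group_add"
  shows "labs (p - q) = sup p q - inf p q"
proof -
  have "sup p q - inf p q = sup p q + sup (-p) (-q)" by (simp add: diff_inf_eq_sup)
  also have "\<dots> = sup (sup (p + -p) (q + -p)) (sup (p + -q) (q + -q))"
    by (simp only: add_sup_distrib_left add_sup_distrib_right)
  also have "\<dots> = sup 0 (sup (p + -q) (- (p + - q)))"
    by (simp add: sup_aci algebra_simps)
  also have "\<dots> = sup 0 (labs (p-q))" unfolding labs_def by simp
  also have "\<dots> = labs (p-q)" by (rule sup.absorb2[OF labs_nonneg])
  finally show ?thesis by simp
qed

lemma sup_scale_le: fixes a b :: "'a::banach_lattice"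
  assumes "0 \<le> c" shows "sup (c *\<^sub>R a) (c *\<^sub>R b) \<le> c *\<^sub>R sup a b"
  by (rule sup_least; rule scaleR_left_mono[OF _ assms]) (rule sup_ge1, rule sup_ge2)

lemma sup_scale: fixes a b :: "'a::banach_lattice"
  assumes "c > 0" shows "sup (c *\<^sub>R a) (c *\<^sub>R b) = c *\<^sub>R sup a b"
proof (rule order.antisym)
  show "sup (c *\<^sub>R a) (c *\<^sub>R b) \<le> c *\<^sub>R sup a b"
    using assms by (intro sup_scale_le) simp
  define S where "S = sup (c *\<^sub>R a) (c *\<^sub>R b)"
  have "sup ((1/c) *\<^sub>R (c *\<^sub>R a)) ((1/c) *\<^sub>R (c *\<^sub>R b)) \<le> (1/c) *\<^sub>R S"
    unfolding S_def using assms by (intro sup_scale_le) simp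
  moreover have "(1/c) *\<^sub>R (c *\<^sub>R a) = a" "(1/c) *\<^sub>R (c *\<^sub>R b) = b"
    using assms by simp_all
  ultimately have "sup a b \<le> (1/c) *\<^sub>R S" by simp
  hence "c *\<^sub>R sup a b \<le> c *\<^sub>R ((1/c) *\<^sub>R S)"
    using assms by (intro scaleR_left_mono) auto
  moreover have "c *\<^sub>R ((1/c) *\<^sub>R S) = S" using assms by simp
  ultimately show "c *\<^sub>R sup a b \<le> sup (c *\<^sub>R a) (c *\<^sub>R b)" unfolding S_def by simp
qed

lemma inf_scale: fixes a b :: "'a::banach_lattice"
  assumes "c > 0" shows "inf (c *\<^sub>R a) (c *\<^sub>R b) = c *\<^sub>R inf a b"
proof -
  have "inf (c *\<^sub>R a) (c *\<^sub>R b) = - sup (- (c *\<^sub>R a)) (- (c *\<^sub>R b))"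
    by (rule inf_eq_neg_sup)
  also have "- (c *\<^sub>R a) = c *\<^sub>R (-a)" by simp
  also have "- (c *\<^sub>R b) = c *\<^sub>R (-b)" by simp
  also have "sup (c *\<^sub>R (-a)) (c *\<^sub>R (-b)) = c *\<^sub>R sup (-a) (-b)" by (rule sup_scale[OF assms])
  also have "- (c *\<^sub>R sup (-a) (-b)) = c *\<^sub>R (- sup (-a) (-b))" by (rule scaleR_minus_right[symmetric])
  also have "- sup (-a) (-b) = inf a b" by (rule inf_eq_neg_sup[symmetric])
  finally show ?thesis .
qed

lemma labs_scale: "c > 0 \<Longrightarrow> labs (c *\<^sub>R (z::'a::banach_lattice)) = c *\<^sub>R labs z"
  unfolding labs_def using sup_scale[of c z "-z"] by simp

lemma key: fixes x y :: "'a::banach_lattice"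
  shows "labs (labs x - labs y) = inf (labs (x+y)) (labs (x-y))"
proof -
  define a where "a = labs (x+y)"
  define b where "b = labs (x-y)"
  define P where "P = labs x"
  define Q where "Q = labs y"
  have 1: "sup a b = P + Q" unfolding a_def b_def P_def Q_def by (rule labs_A)
  have "sup (labs ((x+y)+(x-y))) (labs ((x+y)-(x-y))) = a + b"
    unfolding a_def b_def by (rule labs_A)
  moreover have "(x+y)+(x-y) = 2 *\<^sub>R x" "(x+y)-(x-y) = 2 *\<^sub>R y"
    by (simp_all add: scaleR_2 algebra_simps)
  ultimately have 2: "2 *\<^sub>R sup P Q = a + b"
    unfolding P_def Q_def using sup_scale[of 2 "labs x" "labs y"] by (simp add: labs_scale)
  have 3: "a + b = sup a b + inf a b" by (rule add_eq_inf_sup)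
  have 4: "P + Q = sup P Q + inf P Q" by (rule add_eq_inf_sup)
  have "inf a b = (a + b) - sup a b" by (metis 3 add_diff_cancel_left')
  also have "\<dots> = 2 *\<^sub>R sup P Q - (sup P Q + inf P Q)" by (simp only: 1 2[symmetric] 4)
  also have "\<dots> = sup P Q - inf P Q" by (simp add: scaleR_2 algebra_simps)
  also have "\<dots> = labs (P - Q)" by (simp add: labs_C)
  finally have "inf a b = labs (P - Q)" .
  thus ?thesis unfolding a_def b_def P_def Q_def by (rule sym)
qed

lemma norm_labs: "norm (labs x) = norm (x::'a::banach_lattice)"
proof -
  have "labs (labs x) = labs x" by (rule labs_labs)
  hence "norm (labs x) \<le> norm x" "norm x \<le> norm (labs x)"
    using norm_lattice_mono[of "labs x" x] norm_lattice_mono[of x "labs x"]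
    unfolding labs_def by auto
  thus ?thesis by simp
qed

lemma norm_mono_pos: "0 \<le> x \<Longrightarrow> x \<le> y \<Longrightarrow> norm x \<le> norm (y::'a::banach_lattice)"
proof -
  assume "0 \<le> x" "x \<le> y"
  hence "0 \<le> y" by (rule order.trans)
  thus ?thesis using \<open>0 \<le> x\<close> \<open>x \<le> y\<close> norm_lattice_mono[of x y] labs_of_nonneg[of x] labs_of_nonneg[of y]
    unfolding labs_def by auto
qed

theorem mainTheorem17:
  fixes H :: "'a::banach_lattice set" and r :: real
  assumes "subspace H" and "0 < r" and "r \<le> 1"
  shows "(\<not> (\<exists>e\<in>H. \<exists>f\<in>H. norm e = 1 \<and> norm f = 1 \<and> norm (inf (labs e) (labs f)) < r))
         \<longleftrightarrow> SPR (1 / r) H"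
proof
  assume nb: "\<not> (\<exists>e\<in>H. \<exists>f\<in>H. norm e = 1 \<and> norm f = 1 \<and> norm (inf (labs e) (labs f)) < r)"
  show "SPR (1 / r) H" unfolding SPR_def
  proof (intro ballI)
    fix g h assume g: "g \<in> H" and h: "h \<in> H"
    define a where "a = norm (g+h)"
    define b where "b = norm (g-h)"
    define N where "N = norm (labs g - labs h)"
    have N0: "N \<ge> 0" unfolding N_def by simp
    show "min (norm (g + h)) (norm (g - h)) \<le> 1 / r * norm (labs g - labs h)"
    proof (cases "a = 0 \<or> b = 0")
      case True
      then have "min a b \<le> 0" unfolding a_def b_def by auto
      moreover have "0 \<le> 1/r * N" using N0 assms by simp
      ultimately show ?thesis unfolding a_def b_def N_def by linarith
    next
      case False
      then have a0: "a > 0" and b0: "b > 0" unfolding a_def b_def by auto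
      define m where "m = min a b"
      have m0: "m > 0" using a0 b0 unfolding m_def by simp
      define e where "e = (1/a) *\<^sub>R (g+h)"
      define f where "f = (1/b) *\<^sub>R (g-h)"
      have eH: "e \<in> H" unfolding e_def using assms(1) g h
        by (intro subspace_scale subspace_add) auto
      have fH: "f \<in> H" unfolding f_def using assms(1) g h
        by (intro subspace_scale subspace_diff) auto
      have ne: "norm e = 1" unfolding e_def using a0 a_def by simp
      have nf: "norm f = 1" unfolding f_def using b0 b_def by simp
      have ge: "norm (inf (labs e) (labs f)) \<ge> r"
      proof (rule ccontr)
        assume "\<not> norm (inf (labs e) (labs f)) \<ge> r"
        hence "norm (inf (labs e) (labs f)) < r" by simp
        thus False using nb eH fH ne nf by blast
      qed
      have ma: "m \<le> a" and mb: "m \<le> b" by (simp_all add: m_def)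
      have ia: "1/a \<le> 1/m" using m0 ma by (intro frac_le) auto
      have ib: "1/b \<le> 1/m" using m0 mb by (intro frac_le) auto
      have le1: "labs e \<le> (1/m) *\<^sub>R labs (g+h)"
      proof -
        have "labs e = (1/a) *\<^sub>R labs (g+h)" unfolding e_def using a0 by (simp add: labs_scale)
        also have "\<dots> \<le> (1/m) *\<^sub>R labs (g+h)"
          using ia by (rule scaleR_right_mono[OF _ labs_nonneg])
        finally show ?thesis .
      qed
      have le2: "labs f \<le> (1/m) *\<^sub>R labs (g-h)"
      proof -
        have "labs f = (1/b) *\<^sub>R labs (g-h)" unfolding f_def using b0 by (simp add: labs_scale)
        also have "\<dots> \<le> (1/m) *\<^sub>R labs (g-h)"
          using ib by (rule scaleR_right_mono[OF _ labs_nonneg])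
        finally show ?thesis .
      qed
      have "inf (labs e) (labs f) \<le> inf ((1/m) *\<^sub>R labs (g+h)) ((1/m) *\<^sub>R labs (g-h))"
        using le1 le2 by (rule inf_mono)
      also have "\<dots> = (1/m) *\<^sub>R labs (labs g - labs h)"
        using m0 by (simp add: inf_scale key)
      finally have le3: "inf (labs e) (labs f) \<le> (1/m) *\<^sub>R labs (labs g - labs h)" .
      have pos: "0 \<le> inf (labs e) (labs f)" by (simp add: labs_nonneg)
      have "norm (inf (labs e) (labs f)) \<le> norm ((1/m) *\<^sub>R labs (labs g - labs h))"
        by (rule norm_mono_pos[OF pos le3])
      also have "\<dots> = (1/m) * N" using m0 by (simp add: norm_labs N_def)
      finally have "norm (inf (labs e) (labs f)) \<le> (1/m) * N" .
      hence "r \<le> N / m" using ge by simp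
      hence "r * m \<le> N" using m0 by (simp add: pos_le_divide_eq)
      hence "m * r \<le> N" by (simp add: mult.commute)
      hence "m \<le> N / r" using assms(2) by (simp add: pos_le_divide_eq)
      thus ?thesis unfolding m_def a_def b_def N_def by simp
    qed
  qed
next
  assume S: "SPR (1 / r) H"
  show "\<not> (\<exists>e\<in>H. \<exists>f\<in>H. norm e = 1 \<and> norm f = 1 \<and> norm (inf (labs e) (labs f)) < r)"
  proof
    assume "\<exists>e\<in>H. \<exists>f\<in>H. norm e = 1 \<and> norm f = 1 \<and> norm (inf (labs e) (labs f)) < r"
    then obtain e f where eH: "e \<in> H" and fH: "f \<in> H" and ne: "norm e = 1" and nf: "norm f = 1"
      and lt: "norm (inf (labs e) (labs f)) < r" by blast
    define g where "g = (1/2::real) *\<^sub>R (e + f)"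
    define h where "h = (1/2::real) *\<^sub>R (e - f)"
    have gH: "g \<in> H" unfolding g_def using assms(1) eH fH
      by (intro subspace_scale subspace_add) auto
    have hH: "h \<in> H" unfolding h_def using assms(1) eH fH
      by (intro subspace_scale subspace_diff) auto
    have "g + h = (1/2::real) *\<^sub>R ((e+f)+(e-f))" unfolding g_def h_def
      by (rule scaleR_right_distrib[symmetric])
    also have "(e+f)+(e-f) = (2::real) *\<^sub>R e" by (simp add: scaleR_2 algebra_simps)
    finally have gp: "g + h = e" by simp
    have "g - h = (1/2::real) *\<^sub>R ((e+f)-(e-f))" unfolding g_def h_def
      by (rule scaleR_right_diff_distrib[symmetric])
    also have "(e+f)-(e-f) = (2::real) *\<^sub>R f" by (simp add: scaleR_2 algebra_simps)
    finally have gm: "g - h = f" by simp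
    have "norm (labs g - labs h) = norm (labs (labs g - labs h))" by (simp add: norm_labs)
    also have "\<dots> = norm (inf (labs e) (labs f))" by (simp add: key gp gm)
    finally have eq: "norm (labs g - labs h) = norm (inf (labs e) (labs f))" .
    have "min (norm (g + h)) (norm (g - h)) \<le> 1 / r * norm (labs g - labs h)"
      using S gH hH unfolding SPR_def by blast
    hence "1 \<le> 1 / r * norm (inf (labs e) (labs f))" using gp gm ne nf eq by simp
    hence "r \<le> norm (inf (labs e) (labs f))" using assms(2) by (simp add: field_simps)
    thus False using lt by simp
  qed
qed

end
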